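(* Let $G$ be a finite graph with no frozen vertices. Then the Mycielskian $M(G)$ of $G$ has no frozen vertices.
   Context: For a graph $H$, a vertex $x$ is frozen if for every $\chi(H)$-colouring of $H$ all $\chi(H)$ colours appear on the closed neighbourhood of $x$ (so $x$ can never be recoloured); $\chi$ denotes the chromatic number. If $G$ has vertices $v_1,\dots,v_n$, its Mycielskian $M(G)$ is obtained by adding new vertices $u_1,\dots,u_n,w$, edges $wu_i$ for all $i$, and for each edge $v_iv_j\in E(G)$ the edges $u_iv_j$ and $v_iu_j$. It is known that $\chi(M(G))=\chi(G)+1$. *)

theory Defs
  imports Main
begin

definition simple_graph :: "'a set \<Rightarrow> ('a \<Rightarrow> 'a \<Rightarrow> bool) \<Rightarrow> bool" where
  "simple_graph V E \<longleftrightarrow> finite V \<and> (\<forall>x y. E x y \<longrightarrow> x \<in> V \<and> y \<in> V)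
     \<and> (\<forall>x y. E x y \<longrightarrow> E y x) \<and> (\<forall>x. \<not> E x x)"

definition colouring :: "'a set \<Rightarrow> ('a \<Rightarrow> 'a \<Rightarrow> bool) \<Rightarrow> nat \<Rightarrow> ('a \<Rightarrow> nat) \<Rightarrow> bool" where
  "colouring V E k c \<longleftrightarrow> (\<forall>x\<in>V. c x < k) \<and> (\<forall>x\<in>V. \<forall>y\<in>V. E x y \<longrightarrow> c x \<noteq> c y)"

definition chromatic_number :: "'a set \<Rightarrow> ('a \<Rightarrow> 'a \<Rightarrow> bool) \<Rightarrow> nat" where
  "chromatic_number V E = (LEAST k. \<exists>c. colouring V E k c)"

definition closed_nbhd :: "'a set \<Rightarrow> ('a \<Rightarrow> 'a \<Rightarrow> bool) \<Rightarrow> 'a \<Rightarrow> 'a set" where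
  "closed_nbhd V E x = insert x {y \<in> V. E x y}"

definition frozen :: "'a set \<Rightarrow> ('a \<Rightarrow> 'a \<Rightarrow> bool) \<Rightarrow> 'a \<Rightarrow> bool" where
  "frozen V E x \<longleftrightarrow> (\<forall>c. colouring V E (chromatic_number V E) c \<longrightarrow>
       {..<chromatic_number V E} \<subseteq> c ` closed_nbhd V E x)"

text \<open>Vertices of the Mycielskian: copies v_i, u_i of the old vertices and w.\<close>
datatype 'a myc_vertex = Vv 'a | Uu 'a | Ww

definition myc_verts :: "'a set \<Rightarrow> 'a myc_vertex set" where
  "myc_verts V = Vv ` V \<union> Uu ` V \<union> {Ww}"

fun myc_edge :: "'a set \<Rightarrow> ('a \<Rightarrow> 'a \<Rightarrow> bool) \<Rightarrow> 'a myc_vertex \<Rightarrow> 'a myc_vertex \<Rightarrow> bool" where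
  "myc_edge V E (Vv a) (Vv b) = E a b"
| "myc_edge V E (Uu a) (Vv b) = E a b"
| "myc_edge V E (Vv a) (Uu b) = E a b"
| "myc_edge V E Ww (Uu a) = (a \<in> V)"
| "myc_edge V E (Uu a) Ww = (a \<in> V)"
| "myc_edge V E _ _ = False"

end

theory Submission
  imports Defs
begin

lemma colouring_exists:
  assumes "simple_graph V E"
  shows "\<exists>c. colouring V E (card V) c"
proof -
  have "finite V" using assms by (simp add: simple_graph_def)
  then obtain h where h: "bij_betw h V {0..<card V}" using ex_bij_betw_finite_nat by blast
  have "colouring V E (card V) h"
    unfolding colouring_def
  proof (intro conjI ballI impI)
    fix x assume "x \<in> V" thus "h x < card V" using h by (auto simp: bij_betw_def)
  next
    fix x y assume "x \<in> V" "y \<in> V" "E x y"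
    hence "x \<noteq> y" using assms by (auto simp: simple_graph_def)
    thus "h x \<noteq> h y" using h \<open>x \<in> V\<close> \<open>y \<in> V\<close> by (auto simp: bij_betw_def inj_on_def)
  qed
  thus ?thesis by blast
qed

lemma chi_le: "colouring V E k c \<Longrightarrow> chromatic_number V E \<le> k"
  unfolding chromatic_number_def by (rule Least_le) blast

lemma chi_col: "colouring V E k c \<Longrightarrow> \<exists>c. colouring V E (chromatic_number V E) c"
  unfolding chromatic_number_def by (rule LeastI_ex) blast

lemma colouring_mono: "colouring V E m c \<Longrightarrow> m \<le> k \<Longrightarrow> colouring V E k c"
  unfolding colouring_def by force

lemma myc_colouring_iff:
  assumes "simple_graph V E"
  shows "colouring (myc_verts V) (myc_edge V E) K f \<longleftrightarrow>
    (\<forall>a\<in>V. f (Vv a) < K \<and> f (Uu a) < K) \<and> f Ww < K \<and>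
    (\<forall>a\<in>V. \<forall>b\<in>V. E a b \<longrightarrow> f (Vv a) \<noteq> f (Vv b) \<and> f (Uu a) \<noteq> f (Vv b)) \<and>
    (\<forall>a\<in>V. f (Uu a) \<noteq> f Ww)"
proof
  assume c: "colouring (myc_verts V) (myc_edge V E) K f"
  show "(\<forall>a\<in>V. f (Vv a) < K \<and> f (Uu a) < K) \<and> f Ww < K \<and>
    (\<forall>a\<in>V. \<forall>b\<in>V. E a b \<longrightarrow> f (Vv a) \<noteq> f (Vv b) \<and> f (Uu a) \<noteq> f (Vv b)) \<and>
    (\<forall>a\<in>V. f (Uu a) \<noteq> f Ww)"
  proof (intro conjI ballI impI)
    fix a assume "a \<in> V"
    thus "f (Vv a) < K" "f (Uu a) < K" using c by (auto simp: colouring_def myc_verts_def)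
    show "f (Uu a) \<noteq> f Ww" using c \<open>a \<in> V\<close> unfolding colouring_def myc_verts_def
      by (metis UnCI imageI insertI1 myc_edge.simps(5))
  next
    show "f Ww < K" using c by (auto simp: colouring_def myc_verts_def)
  next
    fix a b assume "a \<in> V" "b \<in> V" "E a b"
    thus "f (Vv a) \<noteq> f (Vv b)" "f (Uu a) \<noteq> f (Vv b)" using c
      unfolding colouring_def myc_verts_def
      by (metis UnCI imageI myc_edge.simps(1), metis UnCI imageI myc_edge.simps(2))
  qed
next
  assume h: "(\<forall>a\<in>V. f (Vv a) < K \<and> f (Uu a) < K) \<and> f Ww < K \<and>
    (\<forall>a\<in>V. \<forall>b\<in>V. E a b \<longrightarrow> f (Vv a) \<noteq> f (Vv b) \<and> f (Uu a) \<noteq> f (Vv b)) \<and>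
    (\<forall>a\<in>V. f (Uu a) \<noteq> f Ww)"
  have sym: "\<And>a b. E a b \<Longrightarrow> E b a" using assms by (simp add: simple_graph_def)
  have h3: "\<forall>a\<in>V. \<forall>b\<in>V. E a b \<longrightarrow> f (Vv a) \<noteq> f (Uu b)"
    using h sym by metis
  show "colouring (myc_verts V) (myc_edge V E) K f"
    unfolding colouring_def
  proof (intro conjI ballI impI)
    fix x assume "x \<in> myc_verts V" thus "f x < K" using h by (auto simp: myc_verts_def)
  next
    fix x y assume x: "x \<in> myc_verts V" and y: "y \<in> myc_verts V" and e: "myc_edge V E x y"
    show "f x \<noteq> f y"
    proof (cases x)
      case (Vv a)
      then show ?thesis using x y e h h3 by (cases y) (auto simp: myc_verts_def)
    next
      case (Uu a)
      then show ?thesis using x y e h h3 by (cases y) (auto simp: myc_verts_def)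
    next
      case Ww
      then show ?thesis using x y e h h3 by (cases y) (auto simp: myc_verts_def)
    qed
  qed
qed

definition lift :: "nat \<Rightarrow> ('a \<Rightarrow> nat) \<Rightarrow> 'a myc_vertex \<Rightarrow> nat" where
  "lift k c x = (case x of Vv a \<Rightarrow> c a | Uu a \<Rightarrow> c a | Ww \<Rightarrow> k)"

lemma lift_col:
  assumes "simple_graph V E" "colouring V E k c"
  shows "colouring (myc_verts V) (myc_edge V E) (Suc k) (lift k c)"
  unfolding myc_colouring_iff[OF assms(1)] using assms(2) by (auto simp: colouring_def lift_def)

lemma myc_chi:
  assumes "simple_graph V E" "V \<noteq> {}"
  shows "chromatic_number (myc_verts V) (myc_edge V E) = Suc (chromatic_number V E)"
proof -
  define k where "k = chromatic_number V E"
  obtain c where c: "colouring V E k c"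
    using colouring_exists[OF assms(1)] chi_col unfolding k_def by blast
  have k1: "k \<ge> 1"
  proof -
    obtain x where "x \<in> V" using assms(2) by blast
    thus ?thesis using c by (auto simp: colouring_def)
  qed
  have up: "chromatic_number (myc_verts V) (myc_edge V E) \<le> Suc k"
    using chi_le lift_col[OF assms(1) c] by blast
  have "\<not> chromatic_number (myc_verts V) (myc_edge V E) \<le> k"
  proof
    assume le: "chromatic_number (myc_verts V) (myc_edge V E) \<le> k"
    obtain f0 where "colouring (myc_verts V) (myc_edge V E)
        (chromatic_number (myc_verts V) (myc_edge V E)) f0"
      using chi_col lift_col[OF assms(1) c] by blast
    hence f: "colouring (myc_verts V) (myc_edge V E) k f0" using colouring_mono le by blast
    define a where "a = f0 Ww"
    define c' where "c' l = (if f0 (Vv l) = a then f0 (Uu l) else f0 (Vv l))" for l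
    define c'' where "c'' l = (if c' l = k - 1 then a else c' l)" for l
    note F = f[unfolded myc_colouring_iff[OF assms(1)]]
    have ak: "a < k" using F a_def by simp
    have c'k: "\<And>l. l \<in> V \<Longrightarrow> c' l < k \<and> c' l \<noteq> a" using F unfolding c'_def a_def by auto
    have c'p: "\<And>l m. l \<in> V \<Longrightarrow> m \<in> V \<Longrightarrow> E l m \<Longrightarrow> c' l \<noteq> c' m"
    proof -
      fix l m assume lm: "l \<in> V" "m \<in> V" "E l m"
      hence "E m l" using assms(1) by (simp add: simple_graph_def)
      thus "c' l \<noteq> c' m" using F lm unfolding c'_def by metis
    qed
    have "colouring V E (k - 1) c''"
      unfolding colouring_def
    proof (intro conjI ballI impI)
      fix x assume "x \<in> V" thus "c'' x < k - 1" using c'k[of x] ak unfolding c''_def by auto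
    next
      fix x y assume "x \<in> V" "y \<in> V" "E x y"
      thus "c'' x \<noteq> c'' y" using c'k[of x] c'k[of y] c'p[of x y] unfolding c''_def by auto
    qed
    hence "k \<le> k - 1" using chi_le k_def by blast
    thus False using k1 by simp
  qed
  thus ?thesis using up k_def by simp
qed

theorem lemma2p5:
  fixes V :: "'a set" and E :: "'a \<Rightarrow> 'a \<Rightarrow> bool"
  assumes "simple_graph V E" and "V \<noteq> {}"
    and "\<forall>x\<in>V. \<not> frozen V E x"
  shows "\<forall>x\<in>myc_verts V. \<not> frozen (myc_verts V) (myc_edge V E) x"
proof
  define k where "k = chromatic_number V E"
  have K: "chromatic_number (myc_verts V) (myc_edge V E) = Suc k"
    using myc_chi[OF assms(1,2)] k_def by simp
  have sym: "\<And>a b. E a b \<Longrightarrow> E b a" using assms(1) by (simp add: simple_graph_def)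
  have inV: "\<And>a b. E a b \<Longrightarrow> a \<in> V \<and> b \<in> V" using assms(1) by (simp add: simple_graph_def)
  have nf: "\<exists>c j. colouring V E k c \<and> j < k \<and> j \<notin> c ` closed_nbhd V E i" if "i \<in> V" for i
    using assms(3) that unfolding frozen_def k_def by blast
  have suff: "\<not> frozen (myc_verts V) (myc_edge V E) x"
    if "colouring (myc_verts V) (myc_edge V E) (Suc k) f" "j < Suc k"
       "\<And>y. y \<in> closed_nbhd (myc_verts V) (myc_edge V E) x \<Longrightarrow> f y \<noteq> j" for f j x
    using that unfolding frozen_def K by (metis imageE lessThan_iff subsetD)
  have k2: "k \<ge> 2"
  proof -
    obtain i where "i \<in> V" using assms(2) by blast
    then obtain c j where "colouring V E k c" "j < k" "j \<notin> c ` closed_nbhd V E i" using nf by blast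
    moreover have "c i < k" using calculation \<open>i \<in> V\<close> by (simp add: colouring_def)
    moreover have "c i \<noteq> j" using calculation by (auto simp: closed_nbhd_def)
    ultimately show ?thesis by linarith
  qed
  fix x assume x: "x \<in> myc_verts V"
  show "\<not> frozen (myc_verts V) (myc_edge V E) x"
  proof (cases x)
    case (Vv i)
    hence i: "i \<in> V" using x by (auto simp: myc_verts_def)
    then obtain c j where c: "colouring V E k c" "j < k" "j \<notin> c ` closed_nbhd V E i" using nf by blast
    show ?thesis
    proof (rule suff[OF lift_col[OF assms(1) c(1)]])
      show "j < Suc k" using c by simp
      fix y assume "y \<in> closed_nbhd (myc_verts V) (myc_edge V E) x"
      thus "lift k c y \<noteq> j" using c(3) Vv
        by (cases y) (auto simp: closed_nbhd_def lift_def myc_verts_def)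
    qed
  next
    case (Uu i)
    hence i: "i \<in> V" using x by (auto simp: myc_verts_def)
    then obtain c j where c: "colouring V E k c" "j < k" "j \<notin> c ` closed_nbhd V E i" using nf by blast
    show ?thesis
    proof (rule suff[OF lift_col[OF assms(1) c(1)]])
      show "j < Suc k" using c by simp
      fix y assume "y \<in> closed_nbhd (myc_verts V) (myc_edge V E) x"
      thus "lift k c y \<noteq> j" using c Uu
        by (cases y) (auto simp: closed_nbhd_def lift_def myc_verts_def)
    qed
  next
    case Ww
    obtain i where "i \<in> V" using assms(2) by blast
    then obtain c j where c: "colouring V E k c" using nf by blast
    define g where "g y = (case y of Vv a \<Rightarrow> c a | Uu a \<Rightarrow> k | Ww \<Rightarrow> 0)" for y
    have g: "colouring (myc_verts V) (myc_edge V E) (Suc k) g"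
      unfolding myc_colouring_iff[OF assms(1)] g_def using c k2 by (auto simp: colouring_def)
    show ?thesis
    proof (rule suff[OF g])
      show "1 < Suc k" using k2 by simp
      fix y assume "y \<in> closed_nbhd (myc_verts V) (myc_edge V E) x"
      thus "g y \<noteq> 1" using k2 Ww
        by (cases y) (auto simp: closed_nbhd_def g_def myc_verts_def)
    qed
  qed
qed

end
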